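(* Let $(TQ\times\mathbb R^m,\vec\lambda^L,E_L)$ be the $m$-contact Lagrangian system of a regular Lagrangian $L:TQ\times\mathbb R^m\to\mathbb R$, and let $$X=F_i\frac{\partial}{\partial q^i}+G_j\frac{\partial}{\partial \dot q^j}+H_k\frac{\partial}{\partial z^k}$$ be a vector field on $TQ\times\mathbb R^m$ which is an $m$-Cartan symmetry, i.e. $\mathcal L_X\lambda^L_i=df_i$ for some $f_i\in C^\infty(TQ\times\mathbb R^m)$, $i=1,\dots,m$. Then for each $i=1,\dots,m$, the $1$-form $d\big(f_i-H_i+X^v(L)\big)$ vanishes on the Reeb distribution, i.e. $d\big(f_i-H_i+X^v(L)\big)(R_k)=0$ for all $k=1,\dots,m$.
   Context: $Q$ is an $n$-dimensional manifold; $TQ\times\mathbb R^m$ has local coordinates $(q^i,\dot q^i,z^1,\dots,z^m)$. $L$ is regular if $W_{ij}=\partial^2L/\partial\dot q^i\partial\dot q^j$ is invertible, with inverse $(W^{ij})$. Define $\lambda^L_k=dz^k-\frac{\partial L}{\partial\dot q^j}dq^j$ ($k=1,\dots,m$) and the Reeb vector fields $R_k=\frac{\partial}{\partial z^k}-W^{ij}\frac{\partial^2L}{\partial\dot q^i\partial z^k}\frac{\partial}{\partial\dot q^j}$, which span the Reeb distribution $\mathcal R$. For $X$ as in the claim, $X^v:=S(X)=F_i\frac{\partial}{\partial\dot q^i}$, where $S=\frac{\partial}{\partial\dot q^i}\otimes dq^i$ is the vertical endomorphism; thus $X^v(L)=F_i\frac{\partial L}{\partial\dot q^i}$. *)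

theory Defs
  imports "HOL-Analysis.Analysis"
begin

text \<open>Local coordinate model of T Q x R^m over a chart domain V (open in R^n):
  points are triples (q, qdot, z).\<close>

type_synonym ('n, 'm) pt = "(real^'n) \<times> (real^'n) \<times> (real^'m)"

definition pd :: "'a::real_normed_vector \<Rightarrow> ('a \<Rightarrow> 'b::real_normed_vector) \<Rightarrow> 'a \<Rightarrow> 'b" where
  "pd v f = (\<lambda>p. frechet_derivative f (at p) v)"

definition smooth_on :: "'a::real_normed_vector set \<Rightarrow> ('a \<Rightarrow> 'b::real_normed_vector) \<Rightarrow> bool" where
  "smooth_on S f \<longleftrightarrow> (\<forall>vs. \<forall>p\<in>S. (foldr pd vs f) differentiable (at p))"

definition dir_q :: "'n::finite \<Rightarrow> ('n, 'm::finite) pt" where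
  "dir_q i = (axis i 1, 0, 0)"
definition dir_v :: "'n::finite \<Rightarrow> ('n, 'm::finite) pt" where
  "dir_v i = (0, axis i 1, 0)"
definition dir_z :: "'m::finite \<Rightarrow> ('n::finite, 'm) pt" where
  "dir_z k = (0, 0, axis k 1)"

definition dfun :: "('a::real_normed_vector \<Rightarrow> real) \<Rightarrow> 'a \<Rightarrow> 'a \<Rightarrow> real" where
  "dfun f p w = frechet_derivative f (at p) w"

text \<open>Lie derivative of a 1-form alpha along a vector field X on an open subset of a vector space:
  (L_X alpha)(w) = X(alpha(w)) - alpha([X,w]) for constant w, i.e. the coordinate formula.\<close>
definition lie_form :: "('a::real_normed_vector \<Rightarrow> 'a) \<Rightarrow> ('a \<Rightarrow> 'a \<Rightarrow> real) \<Rightarrow> 'a \<Rightarrow> 'a \<Rightarrow> real" where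
  "lie_form X \<alpha> p w = frechet_derivative (\<lambda>x. \<alpha> x w) (at p) (X p) + \<alpha> p (frechet_derivative X (at p) w)"

definition Wmat :: "(('n::finite, 'm::finite) pt \<Rightarrow> real) \<Rightarrow> ('n, 'm) pt \<Rightarrow> real^'n^'n" where
  "Wmat L p = (\<chi> i j. pd (dir_v i) (pd (dir_v j) L) p)"

definition regular_on :: "('n::finite, 'm::finite) pt set \<Rightarrow> (('n, 'm) pt \<Rightarrow> real) \<Rightarrow> bool" where
  "regular_on S L \<longleftrightarrow> (\<forall>p\<in>S. invertible (Wmat L p))"

definition lamL :: "(('n::finite, 'm::finite) pt \<Rightarrow> real) \<Rightarrow> 'm \<Rightarrow> ('n, 'm) pt \<Rightarrow> ('n, 'm) pt \<Rightarrow> real" where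
  "lamL L k p w = (snd (snd w)) $ k - (\<Sum>j\<in>UNIV. pd (dir_v j) L p * (fst w $ j))"

definition reeb :: "(('n::finite, 'm::finite) pt \<Rightarrow> real) \<Rightarrow> 'm \<Rightarrow> ('n, 'm) pt \<Rightarrow> ('n, 'm) pt" where
  "reeb L k p = (0, (\<chi> j. - (\<Sum>i\<in>UNIV. matrix_inv (Wmat L p) $ i $ j * pd (dir_v i) (pd (dir_z k) L) p)), axis k 1)"

definition vert_lift_L :: "(('n::finite, 'm::finite) pt \<Rightarrow> ('n, 'm) pt) \<Rightarrow> (('n, 'm) pt \<Rightarrow> real) \<Rightarrow> ('n, 'm) pt \<Rightarrow> real" where
  "vert_lift_L X L p = (\<Sum>i\<in>UNIV. fst (X p) $ i * pd (dir_v i) L p)"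

end

theory Submission
  imports Defs
begin

lemma fd_lin:
  assumes "f differentiable (at x)"
  shows "linear (frechet_derivative f (at x))"
  using assms frechet_derivative_works has_derivative_linear by blast

lemma schwarz_approx:
  fixes f :: "'a::real_normed_vector \<Rightarrow> real"
  assumes S: "open S" "p \<in> S"
    and df: "\<And>x. x \<in> S \<Longrightarrow> f differentiable (at x)"
    and dfu: "\<And>x. x \<in> S \<Longrightarrow> pd u f differentiable (at x)"
    and cont: "continuous (at p) (pd v (pd u f))"
    and e: "\<epsilon> > 0"
  shows "\<exists>d>0. \<forall>s. 0 < s \<and> s < d \<longrightarrow>
     \<bar>(f (p + s *\<^sub>R u + s *\<^sub>R v) - f (p + s *\<^sub>R u) - f (p + s *\<^sub>R v) + f p) / s^2 - pd v (pd u f) p\<bar> < \<epsilon>"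
proof -
  obtain e1 where e1: "e1 > 0" "\<And>y. dist y p < e1 \<Longrightarrow> \<bar>pd v (pd u f) y - pd v (pd u f) p\<bar> < \<epsilon>"
    using cont e unfolding continuous_at_eps_delta dist_real_def by blast
  obtain r where r: "r > 0" "ball p r \<subseteq> S" using S open_contains_ball by blast
  define m where "m = min e1 r"
  define d where "d = m / (norm u + norm v + 1)"
  have m: "m > 0" using e1 r m_def by simp
  have pos: "norm u + norm v + 1 > 0" using norm_ge_zero[of u] norm_ge_zero[of v] by linarith
  have d: "d > 0" using m pos d_def by simp
  have near: "dist (p + t *\<^sub>R u + t' *\<^sub>R v) p < m" if "0 \<le> t" "t \<le> s" "0 \<le> t'" "t' \<le> s" "s < d" for s t t'
  proof -
    have "dist (p + t *\<^sub>R u + t' *\<^sub>R v) p = norm (t *\<^sub>R u + t' *\<^sub>R v)" by (simp add: dist_norm)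
    also have "\<dots> \<le> t * norm u + t' * norm v" using that
      by (metis abs_of_nonneg norm_scaleR norm_triangle_ineq)
    also have "\<dots> \<le> s * norm u + s * norm v" using that
      by (intro add_mono mult_right_mono) auto
    also have "\<dots> \<le> s * (norm u + norm v + 1)" using that by (simp add: algebra_simps)
    also have "\<dots> < d * (norm u + norm v + 1)"
      using that pos by (intro mult_strict_right_mono) auto
    also have "\<dots> = m" unfolding d_def using pos by simp
    finally show ?thesis .
  qed
  have inS: "p + t *\<^sub>R u + t' *\<^sub>R v \<in> S" if "0 \<le> t" "t \<le> s" "0 \<le> t'" "t' \<le> s" "s < d" for s t t'
    using near[OF that] r m_def by (auto simp: dist_commute subset_iff)
  show ?thesis
  proof (intro exI[of _ d] conjI allI impI d)
    fix s assume s: "0 < s \<and> s < d"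
    define g where "g t = f (p + t *\<^sub>R u + s *\<^sub>R v) - f (p + t *\<^sub>R u)" for t
    have gd: "(g has_derivative (\<lambda>h. h * (pd u f (p + t *\<^sub>R u + s *\<^sub>R v) - pd u f (p + t *\<^sub>R u)))) (at t within {0..s})"
      if "0 \<le> t" "t \<le> s" for t
    proof -
      have a: "p + t *\<^sub>R u + s *\<^sub>R v \<in> S" using inS[where s=s and t=t and t'=s] that s by auto
      have b: "p + t *\<^sub>R u \<in> S" using inS[where s=s and t=t and t'=0] that s by auto
      have h1: "((\<lambda>t. f (p + t *\<^sub>R u + s *\<^sub>R v)) has_derivative (\<lambda>h. frechet_derivative f (at (p + t *\<^sub>R u + s *\<^sub>R v)) (h *\<^sub>R u))) (at t)"
        using df[OF a] unfolding frechet_derivative_works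
        by (rule has_derivative_compose[of "\<lambda>t. p + t *\<^sub>R u + s *\<^sub>R v", unfolded o_def, rotated]) (auto intro!: derivative_eq_intros)
      have h2: "((\<lambda>t. f (p + t *\<^sub>R u)) has_derivative (\<lambda>h. frechet_derivative f (at (p + t *\<^sub>R u)) (h *\<^sub>R u))) (at t)"
        using df[OF b] unfolding frechet_derivative_works
        by (rule has_derivative_compose[of "\<lambda>t. p + t *\<^sub>R u", unfolded o_def, rotated]) (auto intro!: derivative_eq_intros)
      have "(g has_derivative (\<lambda>h. frechet_derivative f (at (p + t *\<^sub>R u + s *\<^sub>R v)) (h *\<^sub>R u) - frechet_derivative f (at (p + t *\<^sub>R u)) (h *\<^sub>R u))) (at t)"
        unfolding g_def by (rule has_derivative_diff[OF h1 h2])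
      moreover have "(\<lambda>h. frechet_derivative f (at (p + t *\<^sub>R u + s *\<^sub>R v)) (h *\<^sub>R u) - frechet_derivative f (at (p + t *\<^sub>R u)) (h *\<^sub>R u))
          = (\<lambda>h. h * (pd u f (p + t *\<^sub>R u + s *\<^sub>R v) - pd u f (p + t *\<^sub>R u)))"
        using linear_scale[OF fd_lin[OF df[OF a]]] linear_scale[OF fd_lin[OF df[OF b]]]
        by (auto simp: pd_def algebra_simps)
      ultimately show ?thesis by (simp add: has_derivative_at_withinI)
    qed
    obtain \<xi> where xi: "\<xi> \<in> {0<..<s}" "g s - g 0 = (s - 0) * (pd u f (p + \<xi> *\<^sub>R u + s *\<^sub>R v) - pd u f (p + \<xi> *\<^sub>R u))"
      using mvt_simple[of 0 s g, OF _ gd] s by auto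
    define h where "h t = pd u f (p + \<xi> *\<^sub>R u + t *\<^sub>R v)" for t
    have hd: "(h has_derivative (\<lambda>k. k * pd v (pd u f) (p + \<xi> *\<^sub>R u + t *\<^sub>R v))) (at t within {0..s})"
      if "0 \<le> t" "t \<le> s" for t
    proof -
      have a: "p + \<xi> *\<^sub>R u + t *\<^sub>R v \<in> S" using inS[where s=s and t="\<xi>" and t'=t] that s xi by auto
      have "(h has_derivative (\<lambda>k. frechet_derivative (pd u f) (at (p + \<xi> *\<^sub>R u + t *\<^sub>R v)) (k *\<^sub>R v))) (at t)"
        using dfu[OF a] unfolding frechet_derivative_works h_def
        by (rule has_derivative_compose[of "\<lambda>t. p + \<xi> *\<^sub>R u + t *\<^sub>R v", unfolded o_def, rotated]) (auto intro!: derivative_eq_intros)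
      moreover have "(\<lambda>k. frechet_derivative (pd u f) (at (p + \<xi> *\<^sub>R u + t *\<^sub>R v)) (k *\<^sub>R v))
            = (\<lambda>k. k * pd v (pd u f) (p + \<xi> *\<^sub>R u + t *\<^sub>R v))"
        using linear_scale[OF fd_lin[OF dfu[OF a]]] by (auto simp: pd_def)
      ultimately show ?thesis by (simp add: has_derivative_at_withinI)
    qed
    obtain \<eta> where eta: "\<eta> \<in> {0<..<s}" "h s - h 0 = (s - 0) * pd v (pd u f) (p + \<xi> *\<^sub>R u + \<eta> *\<^sub>R v)"
      using mvt_simple[of 0 s h, OF _ hd] s by auto
    have "f (p + s *\<^sub>R u + s *\<^sub>R v) - f (p + s *\<^sub>R u) - f (p + s *\<^sub>R v) + f p = g s - g 0"
      by (simp add: g_def)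
    also have "\<dots> = s * s * pd v (pd u f) (p + \<xi> *\<^sub>R u + \<eta> *\<^sub>R v)"
      using xi(2) eta(2) by (simp add: h_def)
    finally have eq: "(f (p + s *\<^sub>R u + s *\<^sub>R v) - f (p + s *\<^sub>R u) - f (p + s *\<^sub>R v) + f p) / s^2 = pd v (pd u f) (p + \<xi> *\<^sub>R u + \<eta> *\<^sub>R v)"
      using s by (simp add: power2_eq_square)
    have "dist (p + \<xi> *\<^sub>R u + \<eta> *\<^sub>R v) p < e1"
      using near[where s=s and t="\<xi>" and t'="\<eta>"] xi eta s m_def by auto
    then show "\<bar>(f (p + s *\<^sub>R u + s *\<^sub>R v) - f (p + s *\<^sub>R u) - f (p + s *\<^sub>R v) + f p) / s^2 - pd v (pd u f) p\<bar> < \<epsilon>"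
      unfolding eq using e1 by blast
  qed
qed

lemma schwarz:
  fixes f :: "'a::real_normed_vector \<Rightarrow> real"
  assumes S: "open S" "p \<in> S"
    and df: "\<And>x. x \<in> S \<Longrightarrow> f differentiable (at x)"
    and dfu: "\<And>x. x \<in> S \<Longrightarrow> pd u f differentiable (at x)"
    and dfv: "\<And>x. x \<in> S \<Longrightarrow> pd v f differentiable (at x)"
    and c1: "continuous (at p) (pd v (pd u f))"
    and c2: "continuous (at p) (pd u (pd v f))"
  shows "pd v (pd u f) p = pd u (pd v f) p"
proof (rule ccontr)
  let ?A = "pd v (pd u f) p" and ?B = "pd u (pd v f) p"
  assume ne: "?A \<noteq> ?B"
  define e where "e = \<bar>?A - ?B\<bar> / 2"
  have e: "e > 0" using ne e_def by simp
  obtain d1 where d1: "d1 > 0" "\<forall>s. 0 < s \<and> s < d1 \<longrightarrow>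
     \<bar>(f (p + s *\<^sub>R u + s *\<^sub>R v) - f (p + s *\<^sub>R u) - f (p + s *\<^sub>R v) + f p) / s^2 - ?A\<bar> < e"
    using schwarz_approx[OF S df dfu c1 e] by blast
  obtain d2 where d2: "d2 > 0" "\<forall>s. 0 < s \<and> s < d2 \<longrightarrow>
     \<bar>(f (p + s *\<^sub>R v + s *\<^sub>R u) - f (p + s *\<^sub>R v) - f (p + s *\<^sub>R u) + f p) / s^2 - ?B\<bar> < e"
    using schwarz_approx[OF S df dfv c2 e] by blast
  define s where "s = min d1 d2 / 2"
  have s: "0 < s" "s < d1" "s < d2" using d1 d2 s_def by auto
  have eq: "f (p + s *\<^sub>R v + s *\<^sub>R u) - f (p + s *\<^sub>R v) - f (p + s *\<^sub>R u) + f p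
      = f (p + s *\<^sub>R u + s *\<^sub>R v) - f (p + s *\<^sub>R u) - f (p + s *\<^sub>R v) + f p"
    by (simp add: add_ac)
  have "\<bar>(f (p + s *\<^sub>R u + s *\<^sub>R v) - f (p + s *\<^sub>R u) - f (p + s *\<^sub>R v) + f p) / s^2 - ?A\<bar> < e"
    using d1 s by blast
  moreover have "\<bar>(f (p + s *\<^sub>R u + s *\<^sub>R v) - f (p + s *\<^sub>R u) - f (p + s *\<^sub>R v) + f p) / s^2 - ?B\<bar> < e"
    using d2 s eq by metis
  ultimately show False using e_def abs_triangle_ineq[of "?A - (f (p + s *\<^sub>R u + s *\<^sub>R v) - f (p + s *\<^sub>R u) - f (p + s *\<^sub>R v) + f p) / s^2" "(f (p + s *\<^sub>R u + s *\<^sub>R v) - f (p + s *\<^sub>R u) - f (p + s *\<^sub>R v) + f p) / s^2 - ?B"] by (simp add: abs_minus_commute)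
qed

lemma hd_nth:
  "(g has_derivative g') F \<Longrightarrow> ((\<lambda>x. g x $ i) has_derivative (\<lambda>h. g' h $ i)) F"
  using bounded_linear.has_derivative[OF bounded_linear_vec_nth] by blast

lemma sm_diff0: "smooth_on S f \<Longrightarrow> p \<in> S \<Longrightarrow> f differentiable (at p)"
  unfolding smooth_on_def by (metis foldr.simps(1) id_apply)
lemma sm_diff1: "smooth_on S f \<Longrightarrow> p \<in> S \<Longrightarrow> pd a f differentiable (at p)"
  unfolding smooth_on_def by (drule spec[of _ "[a]"]) simp
lemma sm_diff2: "smooth_on S f \<Longrightarrow> p \<in> S \<Longrightarrow> pd a (pd b f) differentiable (at p)"
  unfolding smooth_on_def by (drule spec[of _ "[a,b]"]) simp

theorem theorem6:
  fixes V :: "(real^'n::finite) set"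
    and L :: "('n, 'm::finite) pt \<Rightarrow> real"
    and X :: "('n, 'm) pt \<Rightarrow> ('n, 'm) pt"
    and f :: "'m \<Rightarrow> ('n, 'm) pt \<Rightarrow> real"
  assumes "open V"
    and "smooth_on (V \<times> UNIV \<times> UNIV) L"
    and "regular_on (V \<times> UNIV \<times> UNIV) L"
    and "smooth_on (V \<times> UNIV \<times> UNIV) X"
    and "\<And>i. smooth_on (V \<times> UNIV \<times> UNIV) (f i)"
    and "\<And>i p w. p \<in> V \<times> UNIV \<times> UNIV \<Longrightarrow> lie_form X (lamL L i) p w = dfun (f i) p w"
  shows "\<forall>i k. \<forall>p \<in> V \<times> UNIV \<times> UNIV.
           dfun (\<lambda>x. f i x - snd (snd (X x)) $ i + vert_lift_L X L x) p (reeb L k p) = 0"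
proof (intro allI ballI)
  fix i k and p :: "('n, 'm) pt"
  define S where "S = V \<times> (UNIV :: (real^'n) set) \<times> (UNIV :: (real^'m) set)"
  assume pS: "p \<in> V \<times> UNIV \<times> UNIV"
  hence p: "p \<in> S" by (simp add: S_def)
  have oS: "open S" unfolding S_def using assms(1) by (intro open_Times) auto
  have sL: "smooth_on S L" and sX: "smooth_on S X" and sf: "smooth_on S (f i)"
    using assms(2,4,5) by (auto simp: S_def)
  define R where "R = reeb L k p"
  define W where "W = Wmat L p"
  define M where "M i' = pd (dir_v i') (pd (dir_z k) L) p" for i'
  define c where "c = fst (snd R)"
  have c_nth: "c $ l = - (\<Sum>i'\<in>UNIV. matrix_inv W $ i' $ l * M i')" for l
    by (simp add: c_def R_def reeb_def W_def M_def)
  have fstR: "fst R = 0" by (simp add: R_def reeb_def)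
  have sumeq: "(\<Sum>l\<in>UNIV. c $ l *\<^sub>R dir_v l) = (0, c, 0)"
  proof -
    have "(\<Sum>l\<in>UNIV. c $ l *\<^sub>R dir_v l) = (0, (\<Sum>l\<in>UNIV. c $ l *\<^sub>R axis l 1), 0)"
      by (simp add: dir_v_def fst_sum snd_sum prod_eq_iff)
    also have "(\<Sum>l\<in>UNIV. c $ l *\<^sub>R axis l (1::real)) = c"
      using basis_expansion[of c] by (simp add: scalar_mult_eq_scaleR)
    finally show ?thesis .
  qed
  have sndR: "snd (snd R) = axis k 1" by (simp add: R_def reeb_def)
  have R_eq: "R = dir_z k + (\<Sum>l\<in>UNIV. c $ l *\<^sub>R dir_v l)"
    unfolding sumeq using fstR sndR by (simp add: dir_z_def c_def prod_eq_iff)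
  have inv: "matrix_inv W ** W = mat 1"
  proof -
    have "invertible W" using assms(3) pS unfolding regular_on_def W_def by blast
    then show ?thesis unfolding invertible_def matrix_inv_def
      by (metis (mono_tags, lifting) someI_ex)
  qed
  have DLv0: "frechet_derivative (pd (dir_v j) L) (at p) R = 0" for j
  proof -
    let ?D = "frechet_derivative (pd (dir_v j) L) (at p)"
    have lin: "linear ?D" using fd_lin[OF sm_diff1[OF sL p]] .
    have "?D R = ?D (dir_z k) + (\<Sum>l\<in>UNIV. c $ l * ?D (dir_v l))"
      unfolding R_eq using lin by (simp add: linear_add linear_sum linear_scale)
    also have "?D (dir_z k) = pd (dir_z k) (pd (dir_v j) L) p" by (simp add: pd_def)
    also have "(\<Sum>l\<in>UNIV. c $ l * ?D (dir_v l)) = (\<Sum>l\<in>UNIV. c $ l * W $ l $ j)"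
      by (simp add: pd_def W_def Wmat_def)
    also have "\<dots> = - (\<Sum>l\<in>UNIV. \<Sum>i'\<in>UNIV. M i' * (matrix_inv W $ i' $ l * W $ l $ j))"
    proof -
      have "c $ l * W $ l $ j = - (\<Sum>i'\<in>UNIV. M i' * (matrix_inv W $ i' $ l * W $ l $ j))" for l
      proof -
        have "c $ l * W $ l $ j = - ((\<Sum>i'\<in>UNIV. matrix_inv W $ i' $ l * M i') * W $ l $ j)"
          by (simp add: c_nth)
        also have "\<dots> = - (\<Sum>i'\<in>UNIV. matrix_inv W $ i' $ l * M i' * W $ l $ j)"
          by (simp only: sum_distrib_right)
        also have "\<dots> = - (\<Sum>i'\<in>UNIV. M i' * (matrix_inv W $ i' $ l * W $ l $ j))"
          by (intro arg_cong[where f=uminus] sum.cong) auto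
        finally show ?thesis .
      qed
      then show ?thesis by (simp add: sum_negf)
    qed
    also have "\<dots> = - (\<Sum>i'\<in>UNIV. M i' * (\<Sum>l\<in>UNIV. matrix_inv W $ i' $ l * W $ l $ j))"
      by (subst sum.swap) (simp only: sum_distrib_left)
    also have "\<dots> = - (\<Sum>i'\<in>UNIV. M i' * (mat 1 :: real^'n^'n) $ i' $ j)"
    proof -
      have "(\<Sum>l\<in>UNIV. matrix_inv W $ i' $ l * W $ l $ j) = (matrix_inv W ** W) $ i' $ j" for i'
        by (simp add: matrix_matrix_mult_def)
      then show ?thesis using inv by simp
    qed
    also have "\<dots> = - M j" by (simp add: mat_def if_distrib cong: if_cong)
    also have "pd (dir_z k) (pd (dir_v j) L) p = M j"
      unfolding M_def
      by (rule schwarz[OF oS p sm_diff0[OF sL] sm_diff1[OF sL] sm_diff1[OF sL]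
            differentiable_imp_continuous_within[OF sm_diff2[OF sL p]]
            differentiable_imp_continuous_within[OF sm_diff2[OF sL p]]])
    finally show ?thesis by simp
  qed
  define DX where "DX = frechet_derivative X (at p)"
  define Df where "Df = frechet_derivative (f i) (at p)"
  define DLv where "DLv j = frechet_derivative (pd (dir_v j) L) (at p)" for j
  have dX: "(X has_derivative DX) (at p)"
    using sm_diff0[OF sX p] frechet_derivative_works DX_def by blast
  have dfi: "(f i has_derivative Df) (at p)"
    using sm_diff0[OF sf p] frechet_derivative_works Df_def by blast
  have dLv: "(pd (dir_v j) L has_derivative DLv j) (at p)" for j
    using sm_diff1[OF sL p, of "dir_v j"] frechet_derivative_works DLv_def by metis
  define phi' where "phi' w = Df w - snd (snd (DX w)) $ i +
      (\<Sum>j\<in>UNIV. fst (X p) $ j * DLv j w + fst (DX w) $ j * pd (dir_v j) L p)" for w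
  have hd: "((\<lambda>x. f i x - snd (snd (X x)) $ i + vert_lift_L X L x) has_derivative phi') (at p)"
    unfolding vert_lift_L_def phi'_def
    by (intro has_derivative_add has_derivative_diff has_derivative_sum has_derivative_mult dfi
        hd_nth has_derivative_snd has_derivative_fst dX dLv)
  have eq1: "dfun (\<lambda>x. f i x - snd (snd (X x)) $ i + vert_lift_L X L x) p R = phi' R"
    unfolding dfun_def using frechet_derivative_at[OF hd] by simp
  have lamconst: "(\<lambda>x. lamL L i x R) = (\<lambda>x. axis k 1 $ i)"
    by (simp add: lamL_def fstR sndR)
  have "lie_form X (lamL L i) p R = dfun (f i) p R" using assms(6)[OF pS] .
  hence lie: "snd (snd (DX R)) $ i - (\<Sum>j\<in>UNIV. pd (dir_v j) L p * fst (DX R) $ j) = Df R"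
    unfolding lie_form_def lamconst dfun_def by (simp add: lamL_def DX_def Df_def)
  have "phi' R = Df R - snd (snd (DX R)) $ i + (\<Sum>j\<in>UNIV. fst (DX R) $ j * pd (dir_v j) L p)"
    unfolding phi'_def using DLv0 by (simp add: DLv_def)
  also have "\<dots> = 0" using lie by (simp add: mult.commute)
  finally show "dfun (\<lambda>x. f i x - snd (snd (X x)) $ i + vert_lift_L X L x) p (reeb L k p) = 0"
    using eq1 R_def by simp
qed

end
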